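(* In the setting described in the context, for each $i=2,\dots,h-1$, writing $\min D_i=a_i x^{\nu_{i,0}}\bar f_1^{\nu_{i,1}}\cdots\bar f_{i-1}^{\nu_{i,i-1}}$ with $a_i\in k^*$, $\nu_{i,0}\ge 0$ and $0\le \nu_{i,j}<p^{n_j}$ for $j\ge1$, the lower jumps satisfy $$b_i=\nu_{i,0}\,p^{n_1+\cdots+n_{i-1}}+\sum_{j=1}^{i-1}\nu_{i,j}\,p^{n_{j+1}+\cdots+n_{i-1}}\,b_j .$$
   Context: Let $k$ be an algebraically closed field of characteristic $p\ge 5$. Let $\pi:X\to\mathbb{P}^1$ be a Galois cover of curves over $k$ with function field $F\supset k(x)$ and Galois group $G$, such that the only ramified point of $\mathbb{P}^1$ is $P_\infty$ (the pole of $x$), which is totally and wildly ramified, and $G$ is a $p$-group equal to its first ramification group. Let $P$ be the unique point of $X$ over $P_\infty$ and $v$ the valuation of $F$ at $P$; thus $v(x)=-|G|$. Let $b_1<\dots<b_{h-1}$ be the jumps of the lower ramification filtration $G_i=\{\sigma: v(\sigma(t)-t)\ge i+1\}$ ($t$ a uniformizer at $P$), with $G_{b_h}=1$ and $[G_{b_i}:G_{b_{i+1}}]=p^{n_i}$, so $|G|=p^{n_1+\cdots+n_{h-1}}$. Let $F_i=F^{G_{b_i}}$, $F_1=k(x)$. There are $\bar f_i\in F_{i+1}$ with $F_{i+1}=F_i(\bar f_i)$, only pole at $P$, $v(\bar f_i)=-\bar m_i$ with $\bar m_i=p^{n_{i+1}+\cdots+n_{h-1}}b_i$, and minimal polynomial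 over $F_i$ equal to $X^{p^{n_i}}+a^{(i)}_{n_i-1}X^{p^{n_i-1}}+\cdots+a^{(i)}_0X-D_i$ with $a^{(i)}_j\in k$, $D_i\in F_i$. Each $D_i$ is a finite sum $\sum\gamma x^{\ell_0}\bar f_1^{\ell_1}\cdots\bar f_{i-1}^{\ell_{i-1}}$ ($\gamma\in k$, $\ell_0\ge0$, $0\le\ell_j<p^{n_j}$) in which distinct monomials have distinct valuations; $\min D_i$ is the summand of smallest valuation, so $v(\min D_i)=v(D_i)$. *)

theory Defs
  imports "HOL-Computational_Algebra.Polynomial"
begin

text \<open>The function field F is modelled as the whole type 'a (a field).
  Valuations are integer-valued functions; their value at 0 is irrelevant
  (morally +infinity) and is never used.\<close>

definition subfield :: "'a::field set \<Rightarrow> bool" where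
  "subfield L \<longleftrightarrow> 0 \<in> L \<and> 1 \<in> L \<and>
     (\<forall>a\<in>L. \<forall>b\<in>L. a + b \<in> L \<and> a * b \<in> L) \<and>
     (\<forall>a\<in>L. - a \<in> L \<and> inverse a \<in> L)"

definition gen_field :: "'a::field set \<Rightarrow> 'a set" where
  "gen_field A = \<Inter> {L. subfield L \<and> A \<subseteq> L}"

definition poly_over :: "'a::field set \<Rightarrow> 'a poly \<Rightarrow> bool" where
  "poly_over L q \<longleftrightarrow> (\<forall>m. coeff q m \<in> L)"

definition alg_closed_subfield :: "'a::field set \<Rightarrow> bool" where
  "alg_closed_subfield k \<longleftrightarrow> subfield k \<and>
     (\<forall>q. poly_over k q \<and> degree q > 0 \<longrightarrow> (\<exists>r\<in>k. poly q r = 0))"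

definition transcendental_over :: "'a::field set \<Rightarrow> 'a \<Rightarrow> bool" where
  "transcendental_over k x \<longleftrightarrow> (\<forall>q. poly_over k q \<and> q \<noteq> 0 \<longrightarrow> poly q x \<noteq> 0)"

definition field_aut :: "('a::field \<Rightarrow> 'a) \<Rightarrow> bool" where
  "field_aut \<sigma> \<longleftrightarrow> bij \<sigma> \<and> (\<forall>a b. \<sigma> (a + b) = \<sigma> a + \<sigma> b \<and> \<sigma> (a * b) = \<sigma> a * \<sigma> b)"

definition fixed_field :: "('a::field \<Rightarrow> 'a) set \<Rightarrow> 'a set" where
  "fixed_field H = {a. \<forall>\<sigma>\<in>H. \<sigma> a = a}"

definition aut_group :: "('a::field \<Rightarrow> 'a) set \<Rightarrow> bool" where
  "aut_group G \<longleftrightarrow> finite G \<and> id \<in> G \<and> (\<forall>\<sigma>\<in>G. field_aut \<sigma>) \<and>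
     (\<forall>\<sigma>\<in>G. \<forall>\<tau>\<in>G. \<sigma> \<circ> \<tau> \<in> G) \<and> (\<forall>\<sigma>\<in>G. inv \<sigma> \<in> G)"

text \<open>A place of F/k, given by its normalized discrete valuation
  (surjective onto Z, trivial on k).\<close>
definition place :: "'a::field set \<Rightarrow> ('a \<Rightarrow> int) \<Rightarrow> bool" where
  "place k w \<longleftrightarrow>
     (\<forall>a b. a \<noteq> 0 \<longrightarrow> b \<noteq> 0 \<longrightarrow> w (a * b) = w a + w b) \<and>
     (\<forall>a b. a \<noteq> 0 \<longrightarrow> b \<noteq> 0 \<longrightarrow> a + b \<noteq> 0 \<longrightarrow> min (w a) (w b) \<le> w (a + b)) \<and>
     (\<forall>a\<in>k. a \<noteq> 0 \<longrightarrow> w a = 0) \<and>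
     (\<exists>t. t \<noteq> 0 \<and> w t = 1)"

definition same_place :: "('a::field \<Rightarrow> int) \<Rightarrow> ('a \<Rightarrow> int) \<Rightarrow> bool" where
  "same_place w u \<longleftrightarrow> (\<forall>a. a \<noteq> 0 \<longrightarrow> w a = u a)"

text \<open>Lower ramification group G_i = {sigma. v(sigma t - t) >= i+1}, t a uniformizer;
  sigma t = t is read as v(0) = infinity.\<close>
definition ram_group :: "('a::field \<Rightarrow> 'a) set \<Rightarrow> ('a \<Rightarrow> int) \<Rightarrow> nat \<Rightarrow> ('a \<Rightarrow> 'a) set" where
  "ram_group G v i = {\<sigma>\<in>G. \<forall>t. t \<noteq> 0 \<and> v t = 1 \<longrightarrow> \<sigma> t = t \<or> int i + 1 \<le> v (\<sigma> t - t)}"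

definition Fld :: "('a::field \<Rightarrow> 'a) set \<Rightarrow> ('a \<Rightarrow> int) \<Rightarrow> (nat \<Rightarrow> nat) \<Rightarrow> nat \<Rightarrow> nat \<Rightarrow> 'a set" where
  "Fld G v b h i = (if i < h then fixed_field (ram_group G v (b i)) else UNIV)"

definition additive_poly :: "nat \<Rightarrow> nat \<Rightarrow> (nat \<Rightarrow> 'a::field) \<Rightarrow> 'a \<Rightarrow> 'a poly" where
  "additive_poly p n a D = monom 1 (p ^ n) + (\<Sum>j<n. monom (a j) (p ^ j)) - [:D:]"

definition mon :: "'a::field \<Rightarrow> (nat \<Rightarrow> 'a) \<Rightarrow> nat \<Rightarrow> (nat \<Rightarrow> nat) \<Rightarrow> 'a" where
  "mon x fb i l = x ^ l 0 * (\<Prod>j\<in>{1..<i}. fb j ^ l j)"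

end

theory Submission imports Defs begin

lemma vmult: "place k v \<Longrightarrow> a \<noteq> 0 \<Longrightarrow> b \<noteq> 0 \<Longrightarrow> v (a*b) = v a + v b"
  by (simp add: place_def)

lemma vone: "place k v \<Longrightarrow> v (1::'a::field) = 0"
  using vmult[of k v 1 1] by simp

lemma vneg: assumes "place k v" "(a::'a::field) \<noteq> 0" shows "v (-a) = v a"
proof -
  have "v ((-1::'a) * (-1)) = v (-1) + v (-1)" using vmult[OF assms(1), of "-1" "-1"] by simp
  moreover have "(-1::'a) * (-1) = 1" by simp
  ultimately have "v (-1::'a) = 0" using vone[OF assms(1)] by simp
  then show ?thesis using vmult[OF assms(1), of "-1" a] assms(2) by simp
qed

lemma vultra: "place k v \<Longrightarrow> a \<noteq> 0 \<Longrightarrow> b \<noteq> 0 \<Longrightarrow> a + b \<noteq> 0 \<Longrightarrow> min (v a) (v b) \<le> v (a + b)"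
  by (simp add: place_def)

lemma vdom: assumes pl: "place k v" and a: "(a::'a::field) \<noteq> 0"
  and r: "r = 0 \<or> (r \<noteq> 0 \<and> v r > v a)"
  shows "a + r \<noteq> 0 \<and> v (a + r) = v a"
proof (cases "r = 0")
  case True then show ?thesis using a by simp
next
  case False
  with r have lt: "v r > v a" by simp
  have ne: "a + r \<noteq> 0"
  proof
    assume "a + r = 0" then have "r = -a" by (metis add.commute eq_neg_iff_add_eq_0)
    then show False using lt vneg[OF pl a] by simp
  qed
  have "min (v a) (v r) \<le> v (a + r)" using vultra[OF pl a False ne] .
  then have ge: "v a \<le> v (a+r)" using lt by simp
  have "a = (a + r) + (-r)" by simp
  then have "min (v (a+r)) (v (-r)) \<le> v a"
    using vultra[OF pl ne, of "-r"] False a by (metis neg_equal_0_iff_equal)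
  then have "v (a+r) \<le> v a" using vneg[OF pl False] lt by linarith
  with ge ne show ?thesis by simp
qed

lemma vsum_gt: assumes pl: "place k v" and fin: "finite A"
  and h: "\<forall>j\<in>A. f j = (0::'a::field) \<or> (f j \<noteq> 0 \<and> v (f j) > V)"
  shows "sum f A = 0 \<or> (sum f A \<noteq> 0 \<and> v (sum f A) > V)"
  using fin h
proof (induction A rule: finite_induct)
  case empty then show ?case by simp
next
  case (insert j A)
  then have IH: "sum f A = 0 \<or> (sum f A \<noteq> 0 \<and> v (sum f A) > V)" by simp
  have fj: "f j = 0 \<or> (f j \<noteq> 0 \<and> v (f j) > V)" using insert by simp
  have s: "sum f (insert j A) = f j + sum f A" using insert by simp
  show ?case
  proof (cases "f j = 0 \<or> sum f A = 0 \<or> f j + sum f A = 0")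
    case True then show ?thesis using s IH fj by auto
  next
    case False
    then have "min (v (f j)) (v (sum f A)) \<le> v (f j + sum f A)"
      using vultra[OF pl] by blast
    then show ?thesis using False IH fj s by auto
  qed
qed

lemma vpow: assumes pl: "place k v" and a: "(a::'a::field) \<noteq> 0"
  shows "v (a ^ m) = int m * v a"
proof (induction m)
  case 0 then show ?case using vone[OF pl] by simp
next
  case (Suc m) then show ?case using vmult[OF pl a, of "a^m"] a by (simp add: algebra_simps)
qed

lemma vprod: assumes pl: "place k v" and fin: "finite A" and nz: "\<forall>j\<in>A. f j \<noteq> (0::'a::field)"
  shows "v (prod f A) = (\<Sum>j\<in>A. v (f j))"
  using fin nz
proof (induction A rule: finite_induct)
  case empty then show ?case using vone[OF pl] by simp
next
  case (insert j A)
  then have "prod f A \<noteq> 0" by simp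
  then show ?case using insert vmult[OF pl, of "f j" "prod f A"] by simp
qed

theorem mainTheorem2:
  fixes k :: "'a::field set" and x :: 'a and p :: nat
    and G :: "('a \<Rightarrow> 'a) set" and v :: "'a \<Rightarrow> int"
    and h :: nat and b :: "nat \<Rightarrow> nat" and n :: "nat \<Rightarrow> nat"
    and fbar :: "nat \<Rightarrow> 'a" and a :: "nat \<Rightarrow> nat \<Rightarrow> 'a" and D :: "nat \<Rightarrow> 'a"
    and S :: "nat \<Rightarrow> (nat \<Rightarrow> nat) set" and \<gamma> :: "nat \<Rightarrow> (nat \<Rightarrow> nat) \<Rightarrow> 'a"
    and \<nu> :: "nat \<Rightarrow> nat" and i :: nat
  assumes k_closed: "alg_closed_subfield k"
    and p_prime: "prime p" and p_ge: "5 \<le> p" and char_p: "of_nat p = (0::'a)"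
    and x_trans: "transcendental_over k x"
    \<comment> \<open>Galois cover X -> P^1 with group G, function fields F = 'a over k(x)\<close>
    and G_grp: "aut_group G"
    and G_fix_k: "\<forall>\<sigma>\<in>G. \<forall>c\<in>k. \<sigma> c = c"
    and G_fixed: "fixed_field G = gen_field (insert x k)"
    \<comment> \<open>G is a p-group\<close>
    and G_pgrp: "\<exists>N. card G = p ^ N"
    \<comment> \<open>P: the unique place over P_infinity, totally ramified\<close>
    and v_place: "place k v"
    and v_x: "v x = - int (card G)"
    and P_unique: "\<forall>w. place k w \<and> w x < 0 \<longrightarrow> same_place w v"
    \<comment> \<open>all other places of k(x) are unramified\<close>
    and unram: "\<forall>w. place k w \<and> 0 \<le> w x \<longrightarrow>
                   (\<exists>c\<in>gen_field (insert x k). c \<noteq> 0 \<and> w c = 1)"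
    \<comment> \<open>G equals its first ramification group\<close>
    and G1: "ram_group G v 1 = G"
    \<comment> \<open>jumps of the lower ramification filtration\<close>
    and b_mono: "\<forall>j l. 1 \<le> j \<and> j < l \<and> l \<le> h - 1 \<longrightarrow> b j < b l"
    and b_jumps: "{j. ram_group G v j \<noteq> ram_group G v (Suc j)} = b ` {1..h-1}"
    and idx: "\<forall>j. 1 \<le> j \<and> j < h - 1 \<longrightarrow>
                card (ram_group G v (b j)) = p ^ n j * card (ram_group G v (b (Suc j)))"
    and idx_last: "card (ram_group G v (b (h - 1))) = p ^ n (h - 1)"
    \<comment> \<open>the generators fbar_j and their minimal polynomials\<close>
    and fbar_in: "\<forall>j. 1 \<le> j \<and> j \<le> h - 1 \<longrightarrow> fbar j \<in> Fld G v b h (Suc j)"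
    and fbar_gen: "\<forall>j. 1 \<le> j \<and> j \<le> h - 1 \<longrightarrow>
                    gen_field (insert (fbar j) (Fld G v b h j)) = Fld G v b h (Suc j)"
    and fbar_nz: "\<forall>j. 1 \<le> j \<and> j \<le> h - 1 \<longrightarrow> fbar j \<noteq> 0"
    and fbar_pole: "\<forall>j w. 1 \<le> j \<and> j \<le> h - 1 \<and> place k w \<and> \<not> same_place w v \<longrightarrow> 0 \<le> w (fbar j)"
    and fbar_val: "\<forall>j. 1 \<le> j \<and> j \<le> h - 1 \<longrightarrow>
                    v (fbar j) = - int (p ^ (\<Sum>l\<in>{Suc j..h-1}. n l) * b j)"
    and a_in: "\<forall>j l. 1 \<le> j \<and> j \<le> h - 1 \<and> l < n j \<longrightarrow> a j l \<in> k"
    and D_in: "\<forall>j. 1 \<le> j \<and> j \<le> h - 1 \<longrightarrow> D j \<in> Fld G v b h j"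
    and minpoly_root: "\<forall>j. 1 \<le> j \<and> j \<le> h - 1 \<longrightarrow>
                    poly (additive_poly p (n j) (a j) (D j)) (fbar j) = 0"
    and minpoly_min: "\<forall>j q. 1 \<le> j \<and> j \<le> h - 1 \<and> q \<noteq> 0 \<and> poly_over (Fld G v b h j) q
                       \<and> poly q (fbar j) = 0 \<longrightarrow> p ^ n j \<le> degree q"
    \<comment> \<open>the index i and the expansion of D_i\<close>
    and i_range: "2 \<le> i" "i \<le> h - 1"
    and S_fin: "finite (S i)"
    and S_exps: "\<forall>l\<in>S i. (\<forall>j. 1 \<le> j \<and> j < i \<longrightarrow> l j < p ^ n j) \<and> (\<forall>j. i \<le> j \<longrightarrow> l j = 0)"
    and \<gamma>_in: "\<forall>l\<in>S i. \<gamma> i l \<in> k \<and> \<gamma> i l \<noteq> 0"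
    and D_expand: "D i = (\<Sum>l\<in>S i. \<gamma> i l * mon x fbar i l)"
    and S_distinct: "\<forall>l\<in>S i. \<forall>l'\<in>S i. l \<noteq> l' \<longrightarrow> v (mon x fbar i l) \<noteq> v (mon x fbar i l')"
    \<comment> \<open>min D_i = gamma_i(nu) x^{nu_0} fbar_1^{nu_1} ... fbar_{i-1}^{nu_{i-1}}\<close>
    and \<nu>_in: "\<nu> \<in> S i"
    and \<nu>_min: "\<forall>l\<in>S i. v (mon x fbar i \<nu>) \<le> v (mon x fbar i l)"
  shows "b i = \<nu> 0 * p ^ (\<Sum>j\<in>{1..<i}. n j)
              + (\<Sum>j\<in>{1..<i}. \<nu> j * p ^ (\<Sum>l\<in>{Suc j..<i}. n l) * b j)"
proof -
  have pl: "place k v" by (rule v_place)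
  have k01: "0 \<in> k" "1 \<in> k" using k_closed by (auto simp: alg_closed_subfield_def subfield_def)
  have x0: "x \<noteq> 0"
  proof
    assume "x = 0"
    have "poly_over k [:0,1:]" unfolding poly_over_def
    proof
      fix m show "coeff [:0,1:] m \<in> k" using k01 by (cases m) (auto simp: coeff_pCons split: nat.splits)
    qed
    then have "poly [:0,1:] x \<noteq> 0" using x_trans by (auto simp: transcendental_over_def)
    then show False using \<open>x = 0\<close> by simp
  qed
  have h3: "3 \<le> h" using i_range by linarith
  have anti: "\<And>j. ram_group G v (Suc j) \<subseteq> ram_group G v j"
    unfolding ram_group_def by force
  have sub: "\<And>j. ram_group G v j \<subseteq> G" unfolding ram_group_def by auto
  have nojump: "\<And>m. m < b 1 \<Longrightarrow> ram_group G v m = ram_group G v (Suc m)"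
  proof -
    fix m assume m: "m < b 1"
    show "ram_group G v m = ram_group G v (Suc m)"
    proof (rule ccontr)
      assume "ram_group G v m \<noteq> ram_group G v (Suc m)"
      then have "m \<in> b ` {1..h-1}" using b_jumps by blast
      then obtain l where l: "l \<in> {1..h-1}" "m = b l" by auto
      show False
      proof (cases "l = 1")
        case True then show False using l m by simp
      next
        case False then have "b 1 < b l" using b_mono l by auto
        then show False using l m by simp
      qed
    qed
  qed
  have b1: "1 \<le> b 1"
  proof (rule ccontr)
    assume "\<not> 1 \<le> b 1" then have "b 1 = 0" by simp
    have "0 \<in> b ` {1..h-1}" using \<open>b 1 = 0\<close> h3 by force
    then have "ram_group G v 0 \<noteq> ram_group G v 1" using b_jumps by auto
    moreover have "ram_group G v 0 = G" using sub[of 0] anti[of 0] G1 by auto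
    ultimately show False using G1 by simp
  qed
  have rg: "\<And>j. 1 \<le> j \<Longrightarrow> j \<le> b 1 \<Longrightarrow> ram_group G v j = G"
  proof -
    fix j show "1 \<le> j \<Longrightarrow> j \<le> b 1 \<Longrightarrow> ram_group G v j = G"
    proof (induction j)
      case 0 then show ?case by simp
    next
      case (Suc m)
      show ?case
      proof (cases "m = 0")
        case True then show ?thesis using G1 by simp
      next
        case False then show ?thesis using Suc nojump[of m] by simp
      qed
    qed
  qed
  have rgb1: "ram_group G v (b 1) = G" using rg[OF b1] by simp
  have chain: "\<And>d. d \<le> h - 2 \<Longrightarrow>
      card (ram_group G v (b (h-1-d))) = p ^ (\<Sum>l\<in>{h-1-d..h-1}. n l)"
  proof -
    fix d show "d \<le> h - 2 \<Longrightarrow> card (ram_group G v (b (h-1-d))) = p ^ (\<Sum>l\<in>{h-1-d..h-1}. n l)"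
    proof (induction d)
      case 0 then show ?case using idx_last by simp
    next
      case (Suc d)
      have j: "h - 1 - Suc d \<ge> 1" "h - 1 - Suc d < h - 1" using Suc.prems h3 by auto
      have e: "Suc (h - 1 - Suc d) = h - 1 - d" using Suc.prems h3 by auto
      have "card (ram_group G v (b (h-1-Suc d))) = p ^ n (h-1-Suc d) * card (ram_group G v (b (h-1-d)))"
        using idx j e by metis
      also have "\<dots> = p ^ n (h-1-Suc d) * p ^ (\<Sum>l\<in>{h-1-d..h-1}. n l)" using Suc by simp
      also have "\<dots> = p ^ (\<Sum>l\<in>{h-1-Suc d..h-1}. n l)"
        using sum.atLeast_Suc_atMost[of "h-1-Suc d" "h-1" n] j e by (simp add: power_add)
      finally show ?case .
    qed
  qed
  have cardG: "card G = p ^ (\<Sum>l\<in>{1..h-1}. n l)"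
    using chain[of "h-2"] h3 rgb1 by (simp add: numeral_eq_Suc)
  define T where "T = (\<Sum>l\<in>{i..h-1}. n l)"
  have iv: "\<And>a. a \<le> h - 1 \<Longrightarrow> {a..h-1} = {a..<h}" using h3 by auto
  have split1: "(\<Sum>l\<in>{1..h-1}. n l) = (\<Sum>l\<in>{1..<i}. n l) + T"
    unfolding T_def using iv[of 1] iv[of i] i_range h3 sum.atLeastLessThan_concat[of 1 i h n] by simp
  have split2: "\<And>j. j < i \<Longrightarrow> (\<Sum>l\<in>{Suc j..h-1}. n l) = (\<Sum>l\<in>{Suc j..<i}. n l) + T"
  proof -
    fix j assume "j < i"
    then show "(\<Sum>l\<in>{Suc j..h-1}. n l) = (\<Sum>l\<in>{Suc j..<i}. n l) + T"
      unfolding T_def using iv[of "Suc j"] iv[of i] i_range h3 sum.atLeastLessThan_concat[of "Suc j" i h n] by simp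
  qed
  have split3: "T = n i + (\<Sum>l\<in>{Suc i..h-1}. n l)"
    unfolding T_def using sum.atLeast_Suc_atMost[of i "h-1" n] i_range by simp
  have fnz: "\<And>j. 1 \<le> j \<Longrightarrow> j < i \<Longrightarrow> fbar j \<noteq> 0" using fbar_nz i_range by auto
  have mon_nz: "\<And>l. mon x fbar i l \<noteq> 0" unfolding mon_def using x0 fnz by auto
  have vmon: "\<And>l. v (mon x fbar i l) = int (l 0) * v x + (\<Sum>j\<in>{1..<i}. int (l j) * v (fbar j))"
  proof -
    fix l
    have "v (mon x fbar i l) = v (x ^ l 0) + v (\<Prod>j\<in>{1..<i}. fbar j ^ l j)"
      unfolding mon_def using vmult[OF pl] x0 fnz by auto
    also have "v (\<Prod>j\<in>{1..<i}. fbar j ^ l j) = (\<Sum>j\<in>{1..<i}. v (fbar j ^ l j))"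
      using vprod[OF pl, of "{1..<i}" "\<lambda>j. fbar j ^ l j"] fnz by auto
    also have "\<dots> = (\<Sum>j\<in>{1..<i}. int (l j) * v (fbar j))"
      using vpow[OF pl] fnz by (intro sum.cong) auto
    finally show "v (mon x fbar i l) = int (l 0) * v x + (\<Sum>j\<in>{1..<i}. int (l j) * v (fbar j))"
      using vpow[OF pl x0] by simp
  qed
  have vterm: "\<And>l. l \<in> S i \<Longrightarrow> \<gamma> i l * mon x fbar i l \<noteq> 0 \<and> v (\<gamma> i l * mon x fbar i l) = v (mon x fbar i l)"
  proof -
    fix l assume l: "l \<in> S i"
    then have g: "\<gamma> i l \<in> k" "\<gamma> i l \<noteq> 0" using \<gamma>_in by auto
    then have "v (\<gamma> i l) = 0" using pl by (simp add: place_def)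
    then show "\<gamma> i l * mon x fbar i l \<noteq> 0 \<and> v (\<gamma> i l * mon x fbar i l) = v (mon x fbar i l)"
      using vmult[OF pl g(2) mon_nz] g mon_nz by simp
  qed
  have vD: "D i \<noteq> 0 \<and> v (D i) = v (mon x fbar i \<nu>)"
  proof -
    have dec: "D i = \<gamma> i \<nu> * mon x fbar i \<nu> + (\<Sum>l\<in>S i - {\<nu>}. \<gamma> i l * mon x fbar i l)"
      using D_expand S_fin \<nu>_in by (simp add: sum.remove)
    have "\<forall>l\<in>S i - {\<nu>}. \<gamma> i l * mon x fbar i l = 0 \<or> (\<gamma> i l * mon x fbar i l \<noteq> 0 \<and>
        v (\<gamma> i l * mon x fbar i l) > v (\<gamma> i \<nu> * mon x fbar i \<nu>))"
    proof
      fix l assume l: "l \<in> S i - {\<nu>}"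
      have "v (mon x fbar i \<nu>) < v (mon x fbar i l)"
        using \<nu>_min S_distinct l \<nu>_in by (metis DiffE insertI1 order_le_neq_trans)
      then show "\<gamma> i l * mon x fbar i l = 0 \<or> (\<gamma> i l * mon x fbar i l \<noteq> 0 \<and>
        v (\<gamma> i l * mon x fbar i l) > v (\<gamma> i \<nu> * mon x fbar i \<nu>))"
        using vterm[of l] vterm[OF \<nu>_in] l by auto
    qed
    from vsum_gt[OF pl _ this] S_fin
    have "(\<Sum>l\<in>S i - {\<nu>}. \<gamma> i l * mon x fbar i l) = 0 \<or> ((\<Sum>l\<in>S i - {\<nu>}. \<gamma> i l * mon x fbar i l) \<noteq> 0 \<and>
        v (\<Sum>l\<in>S i - {\<nu>}. \<gamma> i l * mon x fbar i l) > v (\<gamma> i \<nu> * mon x fbar i \<nu>))" by simp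
    from vdom[OF pl _ this] vterm[OF \<nu>_in] dec show ?thesis by simp
  qed
  have bi: "1 \<le> b i" using b_mono i_range b1 by (metis dual_order.strict_trans1 le_numeral_extra(4) less_le_trans nat_less_le one_le_numeral order.strict_trans2 less_imp_le_nat Suc_leI)
  have fi: "fbar i \<noteq> 0" using fbar_nz i_range by auto
  have vfi: "v (fbar i) = - int (p ^ (\<Sum>l\<in>{Suc i..h-1}. n l) * b i)" using fbar_val i_range by auto
  have pp: "0 < p" using p_ge by simp
  have vfneg: "v (fbar i) < 0" using vfi bi pp by simp
  have Deq: "D i = fbar i ^ (p ^ n i) + (\<Sum>j<n i. a i j * fbar i ^ (p ^ j))"
    using minpoly_root i_range by (simp add: additive_poly_def poly_monom poly_sum)
  have vD2: "v (D i) = int (p ^ n i) * v (fbar i)"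
  proof -
    have "\<forall>j\<in>{..<n i}. a i j * fbar i ^ (p ^ j) = 0 \<or> (a i j * fbar i ^ (p ^ j) \<noteq> 0 \<and>
        v (a i j * fbar i ^ (p ^ j)) > v (fbar i ^ (p ^ n i)))"
    proof
      fix j assume j: "j \<in> {..<n i}"
      show "a i j * fbar i ^ (p ^ j) = 0 \<or> (a i j * fbar i ^ (p ^ j) \<noteq> 0 \<and>
        v (a i j * fbar i ^ (p ^ j)) > v (fbar i ^ (p ^ n i)))"
      proof (cases "a i j = 0")
        case True then show ?thesis by simp
      next
        case False
        have "a i j \<in> k" using a_in i_range j by auto
        then have va: "v (a i j) = 0" using False pl by (simp add: place_def)
        have lt: "p ^ j < p ^ n i" using j p_ge by (simp add: power_strict_increasing)
        then have "int (p ^ j) * v (fbar i) > int (p ^ n i) * v (fbar i)"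
          using vfneg by (metis mult_strict_right_mono_neg of_nat_less_iff)
        then show ?thesis using False fi vmult[OF pl False, of "fbar i ^ p ^ j"] va vpow[OF pl fi] by simp
      qed
    qed
    from vsum_gt[OF pl _ this] have "(\<Sum>j<n i. a i j * fbar i ^ (p ^ j)) = 0 \<or>
      ((\<Sum>j<n i. a i j * fbar i ^ (p ^ j)) \<noteq> 0 \<and> v (\<Sum>j<n i. a i j * fbar i ^ (p ^ j)) > v (fbar i ^ (p ^ n i)))" by simp
    from vdom[OF pl _ this] fi Deq vpow[OF pl fi] show ?thesis by simp
  qed
  define A where "A = (\<Sum>j\<in>{1..<i}. n j)"
  have vx: "v x = - int (p ^ A * p ^ T)" using v_x cardG split1 unfolding A_def by (simp add: power_add)
  have vfj: "\<And>j. j \<in> {1..<i} \<Longrightarrow> v (fbar j) = - int (p ^ (\<Sum>l\<in>{Suc j..<i}. n l) * b j * p ^ T)"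
  proof -
    fix j assume j: "j \<in> {1..<i}"
    then have "v (fbar j) = - int (p ^ (\<Sum>l\<in>{Suc j..h-1}. n l) * b j)" using fbar_val i_range by auto
    then show "v (fbar j) = - int (p ^ (\<Sum>l\<in>{Suc j..<i}. n l) * b j * p ^ T)"
      using split2[of j] j by (simp add: power_add)
  qed
  have "v (D i) = - int (p ^ T * b i)"
    using vD2 vfi split3 by (simp add: power_add)
  moreover have "v (D i) = - int (p ^ T * (\<nu> 0 * p ^ A + (\<Sum>j\<in>{1..<i}. \<nu> j * p ^ (\<Sum>l\<in>{Suc j..<i}. n l) * b j)))"
  proof -
    have "v (D i) = int (\<nu> 0) * v x + (\<Sum>j\<in>{1..<i}. int (\<nu> j) * v (fbar j))"
      using vD vmon by simp
    also have "(\<Sum>j\<in>{1..<i}. int (\<nu> j) * v (fbar j)) = (\<Sum>j\<in>{1..<i}. - int (p ^ T * (\<nu> j * p ^ (\<Sum>l\<in>{Suc j..<i}. n l) * b j)))"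
      using vfj by (intro sum.cong) (auto simp: algebra_simps)
    finally show ?thesis using vx by (simp add: algebra_simps sum_distrib_left sum_negf)
  qed
  ultimately have "int (p ^ T * b i) = int (p ^ T * (\<nu> 0 * p ^ A + (\<Sum>j\<in>{1..<i}. \<nu> j * p ^ (\<Sum>l\<in>{Suc j..<i}. n l) * b j)))"
    by linarith
  then have "p ^ T * b i = p ^ T * (\<nu> 0 * p ^ A + (\<Sum>j\<in>{1..<i}. \<nu> j * p ^ (\<Sum>l\<in>{Suc j..<i}. n l) * b j))"
    by (simp only: of_nat_eq_iff)
  moreover have "p ^ T \<noteq> 0" using pp by simp
  ultimately show ?thesis unfolding A_def by (metis mult_left_cancel)
qed

end
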